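(* Let $\Omega=\{z\in\mathbb{C}:|z|=1\}$, $|\psi|<1$, and let $(Z_U,Z_V)$ have density $c(z_u,z_v)=\frac{1}{4\pi^2}\frac{1-|\psi|^2}{|1-\psi z_v\overline{z_u}|^2}$ on $\Omega\times\Omega$. Then for all $j,k\in\mathbb{Z}$, $$E(Z_U^jZ_V^k)=\begin{cases}\psi^j,& j=-k\ge0,\\ \overline{\psi}^{\,-j},& j=-k<0,\\ 0,&\text{otherwise.}\end{cases}$$
   Context: The density is with respect to arc-length measure on each circle; this distribution is denoted $BC_+(\psi)$. *)

theory Defs
  imports "HOL-Probability.Probability"
begin

definition arc_measure :: "complex measure" where
  "arc_measure = distr (restrict_space lborel {0..<2*pi}) borel (\<lambda>t. cis t)"

definition bc_density :: "complex \<Rightarrow> complex \<times> complex \<Rightarrow> real" where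
  "bc_density \<psi> = (\<lambda>(zu, zv). 1 / (4 * pi\<^sup>2) * (1 - (cmod \<psi>)\<^sup>2) / (cmod (1 - \<psi> * zv * cnj zu))\<^sup>2)"

end

theory Submission
  imports Defs
begin


abbreviation RR :: "real measure" where "RR \<equiv> restrict_space lborel {0..<2*pi}"

lemma space_RR[simp]: "space RR = {0..<2*pi}" by (simp add: space_restrict_space)

lemma emeasure_RR: "emeasure RR {0..<2*pi} = ennreal (2*pi)"
  by (subst emeasure_restrict_space) auto

lemma measure_RR: "measure RR (space RR) = 2*pi"
  by (simp add: measure_def emeasure_RR)

lemma finite_RR: "finite_measure RR"
  by (rule finite_measureI) (simp add: emeasure_RR)

lemma int_cis_RR: "integral\<^sup>L RR (\<lambda>s. cis (of_int m * s)) = (if m = 0 then complex_of_real (2*pi) else 0)"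
proof (cases "m = 0")
  case True
  then show ?thesis using measure_RR by (simp add: scaleR_conv_of_real)
next
  case False
  have "integral\<^sup>L RR (\<lambda>s. cis (of_int m * s)) = (LBINT x : {0..<2*pi}. cis (of_int m * x))"
    by (simp add: integral_restrict_space set_lebesgue_integral_def)
  also have "\<dots> = (LBINT x=ereal 0..ereal (2*pi). cis (of_int m * x))"
    using interval_integral_Ico[of 0 "2*pi" "\<lambda>x. cis (of_int m * x)"] by simp
  also have "\<dots> = cis (of_int m * (2*pi)) / (\<i> * of_int m) - cis (of_int m * 0) / (\<i> * of_int m)"
  proof (rule interval_integral_FTC_finite)
    show "continuous_on {min 0 (2 * pi)..max 0 (2 * pi)} (\<lambda>x. cis (real_of_int m * x))"
      by (intro continuous_intros)
    fix x :: real
    show "((\<lambda>x. cis (of_int m * x) / (\<i> * of_int m)) has_vector_derivative cis (of_int m * x))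
        (at x within {min 0 (2 * pi)..max 0 (2 * pi)})"
      unfolding has_vector_derivative_def
      using False
      by (auto intro!: derivative_eq_intros ext simp: field_simps scaleR_conv_of_real)
  qed
  also have "\<dots> = 0"
    using cis_multiple_2pi[of "of_int m"] by (simp add: mult.commute mult.left_commute)
  finally show ?thesis using False by simp
qed

lemma cis_meas[measurable]: "cis \<in> borel_measurable borel"
  by (intro borel_measurable_continuous_onI continuous_intros)

lemma meas_RR[measurable]: "f \<in> borel_measurable borel \<Longrightarrow> f \<in> borel_measurable RR"
  by (rule measurable_restrict_space1) (simp add: measurable_lborel1)

interpretation RRf: finite_measure RR by (rule finite_RR)
interpretation PP: pair_sigma_finite RR RR by unfold_locales

lemma finite_PP: "finite_measure (RR \<Otimes>\<^sub>M RR)"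
  by (intro finite_measure_pair_measure finite_RR)

lemma measure_PP: "measure (RR \<Otimes>\<^sub>M RR) (space (RR \<Otimes>\<^sub>M RR)) = 4 * pi^2"
proof -
  have "emeasure (RR \<Otimes>\<^sub>M RR) ({0..<2*pi} \<times> {0..<2*pi}) = emeasure RR {0..<2*pi} * emeasure RR {0..<2*pi}"
    using RRf.emeasure_pair_measure_Times[of "{0..<2*pi}" RR "{0..<2*pi}"]
    using sets.top[of RR] by simp
  also have "\<dots> = ennreal (4 * pi^2)"
    using emeasure_RR by (simp add: ennreal_mult'[symmetric] power2_eq_square)
  finally show ?thesis
    by (simp add: measure_def space_pair_measure del: space_RR)
qed

lemma int_cis2:
  "integral\<^sup>L (RR \<Otimes>\<^sub>M RR) (\<lambda>(s,t). cis (of_int a * s) * cis (of_int b * t))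
   = (if a = 0 then complex_of_real (2*pi) else 0) * (if b = 0 then complex_of_real (2*pi) else 0)"
proof -
  have int: "integrable (RR \<Otimes>\<^sub>M RR) (\<lambda>(s,t). cis (of_int a * s) * cis (of_int b * t))"
    by (rule finite_measure.integrable_const_bound[OF finite_PP, where B=1])
       (auto simp: norm_mult)
  have "integral\<^sup>L (RR \<Otimes>\<^sub>M RR) (\<lambda>(s,t). cis (of_int a * s) * cis (of_int b * t))
     = (\<integral>s. (\<integral>t. cis (of_int a * s) * cis (of_int b * t) \<partial>RR) \<partial>RR)"
    using PP.integral_fst[OF int] by simp
  also have "\<dots> = (\<integral>s. cis (of_int a * s) * (if b = 0 then complex_of_real (2*pi) else 0) \<partial>RR)"
    by (simp add: int_cis_RR)
  also have "\<dots> = (if a = 0 then complex_of_real (2*pi) else 0) * (if b = 0 then complex_of_real (2*pi) else 0)"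
    by (simp add: int_cis_RR)
  finally show ?thesis .
qed


lemma poisson_series:
  fixes x :: complex assumes "cmod x < 1"
  shows "complex_of_real ((1 - (cmod x)\<^sup>2) / (cmod (1 - x))\<^sup>2) = (\<Sum>n. x^n) + (\<Sum>n. cnj x ^ n) - 1"
proof -
  have x1: "x \<noteq> 1" using assms by auto
  have cx1: "cnj x \<noteq> 1" using x1 by (metis complex_cnj_one complex_cnj_cnj)
  have s1: "(\<Sum>n. x^n) = 1 / (1 - x)" using assms by (rule suminf_geometric)
  have s2: "(\<Sum>n. cnj x^n) = 1 / (1 - cnj x)" using assms by (intro suminf_geometric) simp
  have n1: "complex_of_real ((cmod (1 - x))\<^sup>2) = (1 - x) * (1 - cnj x)"
    using complex_norm_square[of "1-x"] by simp
  have n2: "complex_of_real ((cmod x)\<^sup>2) = x * cnj x"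
    using complex_norm_square[of "x"] by simp
  have "complex_of_real ((1 - (cmod x)\<^sup>2) / (cmod (1 - x))\<^sup>2) = (1 - x * cnj x) / ((1 - x) * (1 - cnj x))"
    using n1 n2 by (simp add: of_real_diff)
  also have "\<dots> = 1 / (1 - x) + 1 / (1 - cnj x) - 1"
  proof -
    have a: "1 - x \<noteq> 0" "1 - cnj x \<noteq> 0" using x1 cx1 by auto
    show ?thesis
    proof -
      have gen: "\<And>A B P Q :: complex. (A + B - 1) * (P*Q) = (A*P)*Q + (B*Q)*P - P*Q"
        by (simp add: algebra_simps)
      have "(1/(1-x) + 1/(1-cnj x) - 1) * ((1-x)*(1-cnj x)) = (1/(1-x)*(1-x))*(1-cnj x) + (1/(1-cnj x)*(1-cnj x))*(1-x) - (1-x)*(1-cnj x)"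
        by (rule gen)
      also have "\<dots> = 1 - x * cnj x" using a by simp algebra
      finally show ?thesis using a by (simp add: divide_eq_eq)
    qed
  qed
  finally show ?thesis using s1 s2 by simp
qed



lemma series_int:
  fixes a :: complex and F :: "nat \<Rightarrow> real \<times> real \<Rightarrow> complex"
  assumes a: "cmod a < 1"
    and meas: "\<And>n. F n \<in> borel_measurable (RR \<Otimes>\<^sub>M RR)"
    and nrm: "\<And>n z. norm (F n z) = cmod a ^ n"
  shows "integrable (RR \<Otimes>\<^sub>M RR) (\<lambda>z. \<Sum>n. F n z)"
    and "integral\<^sup>L (RR \<Otimes>\<^sub>M RR) (\<lambda>z. \<Sum>n. F n z) = (\<Sum>n. integral\<^sup>L (RR \<Otimes>\<^sub>M RR) (F n))"
proof -
  have int: "integrable (RR \<Otimes>\<^sub>M RR) (F n)" for n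
    by (rule finite_measure.integrable_const_bound[OF finite_PP, where B="cmod a ^ n"])
       (auto simp: nrm meas)
  have sm: "AE z in RR \<Otimes>\<^sub>M RR. summable (\<lambda>n. norm (F n z))"
    using a by (simp add: nrm summable_geometric)
  have sm2: "summable (\<lambda>n. \<integral>z. norm (F n z) \<partial>(RR \<Otimes>\<^sub>M RR))"
    using a by (simp add: nrm measure_PP summable_geometric)
  show "integrable (RR \<Otimes>\<^sub>M RR) (\<lambda>z. \<Sum>n. F n z)"
    by (rule integrable_suminf[OF int sm sm2])
  show "integral\<^sup>L (RR \<Otimes>\<^sub>M RR) (\<lambda>z. \<Sum>n. F n z) = (\<Sum>n. integral\<^sup>L (RR \<Otimes>\<^sub>M RR) (F n))"
    by (rule integral_suminf[OF int sm sm2])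
qed

lemma sum_single_int:
  fixes c :: complex and j :: int
  shows "(\<Sum>n. if int n = j then c ^ n else 0) = (if j \<ge> 0 then c ^ nat j else 0)"
proof (cases "j \<ge> 0")
  case True
  have "(\<lambda>n. if int n = j then c ^ n else 0) = (\<lambda>n. if n = nat j then c ^ n else 0)"
    using True by (auto intro!: ext)
  then show ?thesis using True sums_single[of "nat j" "\<lambda>n. c ^ n"] by (simp add: sums_iff)
next
  case False
  have "(\<lambda>n. if int n = j then c ^ n else 0) = (\<lambda>n. 0)"
    using False by (auto intro!: ext)
  then show ?thesis using False by simp
qed

lemma sum_single_int2:
  fixes c A :: complex and j :: int
  shows "(\<Sum>n. A * (if int n = j then c ^ n else 0)) = A * (if j \<ge> 0 then c ^ nat j else 0)"
proof (cases "j \<ge> 0")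
  case True
  have "(\<lambda>n. A * (if int n = j then c ^ n else 0)) = (\<lambda>n. if n = nat j then A * c ^ n else 0)"
    using True by (auto intro!: ext)
  then show ?thesis using True sums_single[of "nat j" "\<lambda>n. A * c ^ n"] by (simp add: sums_iff)
next
  case False
  have "(\<lambda>n. A * (if int n = j then c ^ n else 0)) = (\<lambda>n. 0)"
    using False by (auto intro!: ext)
  then show ?thesis using False by simp
qed



lemma ptF: "(\<psi> * cis (t - s))^n * (cis (of_int j * s) * cis (of_int k * t)) = \<psi>^n * (cis (of_int (j - int n) * s) * cis (of_int (k + int n) * t))"
  apply (simp only: power_mult_distrib Complex.DeMoivre mult.assoc cis_mult)
  apply (simp add: algebra_simps)
  done

lemma ptG: "(\<psi> * cis (s - t))^n * (cis (of_int j * s) * cis (of_int k * t)) = \<psi>^n * (cis (of_int (j + int n) * s) * cis (of_int (k - int n) * t))"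
  apply (simp only: power_mult_distrib Complex.DeMoivre mult.assoc cis_mult)
  apply (simp add: algebra_simps)
  done

lemma main_RR:
  fixes \<psi> :: complex and j k :: int
  assumes psi: "cmod \<psi> < 1"
  shows "integral\<^sup>L (RR \<Otimes>\<^sub>M RR) (\<lambda>(s,t). bc_density \<psi> (cis s, cis t) *\<^sub>R (cis s powi j * cis t powi k)) =
           (if j = - k \<and> j \<ge> 0 then \<psi> powi j
            else if j = - k \<and> j < 0 then cnj \<psi> powi (- j)
            else 0)"
proof -
  define c :: complex where "c = complex_of_real (2*pi)"
  define I :: "int \<Rightarrow> complex" where "I m = (if m = 0 then c else 0)" for m
  define e where "e = (\<lambda>(s::real,t::real). cis (of_int j * s) * cis (of_int k * t))"
  define F where "F n = (\<lambda>(s::real,t::real). (\<psi> * cis (t - s))^n * e (s,t))" for n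
  define G where "G n = (\<lambda>(s::real,t::real). (cnj \<psi> * cis (s - t))^n * e (s,t))" for n
  have cne: "c \<noteq> 0" by (simp add: c_def)
  have e_meas[measurable]: "e \<in> borel_measurable (RR \<Otimes>\<^sub>M RR)" unfolding e_def by measurable
  have F_meas: "F n \<in> borel_measurable (RR \<Otimes>\<^sub>M RR)" for n unfolding F_def by measurable
  have G_meas: "G n \<in> borel_measurable (RR \<Otimes>\<^sub>M RR)" for n unfolding G_def by measurable
  have nF: "norm (F n z) = cmod \<psi> ^ n" for n z
    by (cases z) (simp add: F_def e_def norm_mult norm_power)
  have nG: "norm (G n z) = cmod \<psi> ^ n" for n z
    by (cases z) (simp add: G_def e_def norm_mult norm_power)
  note SF = series_int[OF psi F_meas nF]
  note SG = series_int[OF psi G_meas nG]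
  have e_int: "integrable (RR \<Otimes>\<^sub>M RR) e"
    by (rule finite_measure.integrable_const_bound[OF finite_PP, where B=1])
       (auto simp: e_def norm_mult)
  have Ie: "integral\<^sup>L (RR \<Otimes>\<^sub>M RR) e = I j * I k"
    unfolding e_def I_def c_def by (rule int_cis2)
  have pw: "bc_density \<psi> (cis s, cis t) *\<^sub>R (cis s powi j * cis t powi k) =
      1 / c^2 * ((\<Sum>n. F n (s,t)) + (\<Sum>n. G n (s,t)) - e (s,t))" for s t
  proof -
    define x where "x = \<psi> * cis (t - s)"
    have cx: "cmod x = cmod \<psi>" by (simp add: x_def norm_mult)
    have x1: "cmod x < 1" using cx psi by simp
    have cnjx: "cnj x = cnj \<psi> * cis (s - t)" by (simp add: x_def cis_cnj)
    have mod: "cis t * cnj (cis s) = cis (t - s)" by (simp add: cis_cnj cis_mult)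
    have ps: "cis s powi j * cis t powi k = e (s,t)"
      by (simp add: e_def cis_power_int mult.commute)
    have sx: "summable (\<lambda>n. x^n)" using x1 by (simp add: summable_geometric)
    have scx: "summable (\<lambda>n. cnj x^n)" using x1 by (simp add: summable_geometric)
    have "bc_density \<psi> (cis s, cis t) = 1 / (4 * pi\<^sup>2) * ((1 - (cmod x)\<^sup>2) / (cmod (1 - x))\<^sup>2)"
      by (simp add: bc_density_def x_def mult.assoc mod norm_mult)
    then have H: "complex_of_real (bc_density \<psi> (cis s, cis t)) = 1 / c^2 * ((\<Sum>n. x^n) + (\<Sum>n. cnj x ^ n) - 1)"
      by (simp add: poisson_series[OF x1, symmetric] c_def power2_eq_square)
    have "bc_density \<psi> (cis s, cis t) *\<^sub>R (cis s powi j * cis t powi k) =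
        1 / c^2 * ((\<Sum>n. x^n) * e (s,t) + (\<Sum>n. cnj x ^ n) * e (s,t) - e (s,t))"
      unfolding scaleR_conv_of_real ps H by (simp only: ring_distribs mult.assoc mult_1)
    also have "(\<Sum>n. x^n) * e (s,t) = (\<Sum>n. F n (s,t))"
      using suminf_mult2[OF sx, of "e (s,t)"] by (simp add: F_def x_def)
    also have "(\<Sum>n. cnj x^n) * e (s,t) = (\<Sum>n. G n (s,t))"
      using suminf_mult2[OF scx, of "e (s,t)"] by (simp add: G_def cnjx)
    finally show ?thesis .
  qed
  have "integral\<^sup>L (RR \<Otimes>\<^sub>M RR) (\<lambda>(s,t). bc_density \<psi> (cis s, cis t) *\<^sub>R (cis s powi j * cis t powi k))
      = integral\<^sup>L (RR \<Otimes>\<^sub>M RR) (\<lambda>z. 1 / c^2 * ((\<Sum>n. F n z) + (\<Sum>n. G n z) - e z))"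
    by (intro Bochner_Integration.integral_cong) (auto simp: pw)
  also have "\<dots> = 1 / c^2 * ((\<Sum>n. integral\<^sup>L (RR \<Otimes>\<^sub>M RR) (F n)) + (\<Sum>n. integral\<^sup>L (RR \<Otimes>\<^sub>M RR) (G n)) - I j * I k)"
    using SF SG e_int Ie by simp
  also have "(\<lambda>n. integral\<^sup>L (RR \<Otimes>\<^sub>M RR) (F n)) = (\<lambda>n. (if j = -k then c^2 else 0) * (if int n = j then \<psi> ^ n else 0))"
  proof
    fix n
    have "F n = (\<lambda>(s,t). \<psi>^n * (cis (of_int (j - int n) * s) * cis (of_int (k + int n) * t)))"
      unfolding F_def e_def
      by (intro ext) (simp only: split_beta' fst_conv snd_conv ptF ptG)
    then have "integral\<^sup>L (RR \<Otimes>\<^sub>M RR) (F n) = \<psi>^n * (I (j - int n) * I (k + int n))"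
      using int_cis2[of "j - int n" "k + int n"] by (simp add: I_def c_def split_beta' del: of_int_diff of_int_add)
    then show "integral\<^sup>L (RR \<Otimes>\<^sub>M RR) (F n) = (if j = -k then c^2 else 0) * (if int n = j then \<psi> ^ n else 0)"
      by (auto simp: I_def power2_eq_square)
  qed
  also have "(\<lambda>n. integral\<^sup>L (RR \<Otimes>\<^sub>M RR) (G n)) = (\<lambda>n. (if j = -k then c^2 else 0) * (if int n = -j then cnj \<psi> ^ n else 0))"
  proof
    fix n
    have "G n = (\<lambda>(s,t). cnj \<psi>^n * (cis (of_int (j + int n) * s) * cis (of_int (k - int n) * t)))"
      unfolding G_def e_def
      by (intro ext) (simp only: split_beta' fst_conv snd_conv ptF ptG)
    then have "integral\<^sup>L (RR \<Otimes>\<^sub>M RR) (G n) = cnj \<psi>^n * (I (j + int n) * I (k - int n))"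
      using int_cis2[of "j + int n" "k - int n"] by (simp add: I_def c_def split_beta' del: of_int_diff of_int_add)
    then show "integral\<^sup>L (RR \<Otimes>\<^sub>M RR) (G n) = (if j = -k then c^2 else 0) * (if int n = -j then cnj \<psi> ^ n else 0)"
      by (auto simp: I_def power2_eq_square)
  qed
  finally have eq: "integral\<^sup>L (RR \<Otimes>\<^sub>M RR) (\<lambda>(s,t). bc_density \<psi> (cis s, cis t) *\<^sub>R (cis s powi j * cis t powi k))
     = 1 / c^2 * ((if j = -k then c^2 else 0) * (if j \<ge> 0 then \<psi> ^ nat j else 0)
          + (if j = -k then c^2 else 0) * (if -j \<ge> 0 then cnj \<psi> ^ nat (-j) else 0) - I j * I k)"
    unfolding sum_single_int2 .
  show ?thesis
    unfolding eq using cne by (auto simp: I_def power_int_def power2_eq_square field_simps)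
qed



lemma sets_arc: "sets arc_measure = sets borel"
  by (simp add: arc_measure_def)

lemma cnj_meas[measurable]: "cnj \<in> borel_measurable borel"
  by (intro borel_measurable_continuous_onI continuous_intros)

lemma powi_meas[measurable]: "(\<lambda>z::complex. z powi m) \<in> borel_measurable borel"
proof -
  have "(\<lambda>z::complex. z powi m) = (\<lambda>z. if m \<ge> 0 then z ^ nat m else inverse z ^ nat (- m))"
    by (auto simp: power_int_def intro!: ext)
  then show ?thesis by simp
qed

lemma bc_meas[measurable]: "bc_density \<psi> \<in> borel_measurable (borel \<Otimes>\<^sub>M borel)"
  unfolding bc_density_def by measurable

lemma bc_nonneg: "cmod \<psi> < 1 \<Longrightarrow> 0 \<le> bc_density \<psi> z"
proof -
  assume "cmod \<psi> < 1"
  then have "0 \<le> 1 - (cmod \<psi>)\<^sup>2"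
    by (simp add: abs_square_le_1 less_imp_le)
  then show ?thesis by (cases z) (simp add: bc_density_def)
qed

lemma arc_pair: "arc_measure \<Otimes>\<^sub>M arc_measure = distr (RR \<Otimes>\<^sub>M RR) (borel \<Otimes>\<^sub>M borel) (\<lambda>(s, t). (cis s, cis t))"
  unfolding arc_measure_def
proof (rule pair_measure_distr)
  show "sigma_finite_measure (distr RR borel cis)"
    by (intro finite_measure.sigma_finite_measure finite_measure.finite_measure_distr finite_RR) simp
qed simp_all


theorem mainTheorem8:
  fixes M :: "'a measure" and ZU ZV :: "'a \<Rightarrow> complex" and \<psi> :: complex and j k :: int
  assumes "prob_space M"
    and "cmod \<psi> < 1"
    and "distributed M (arc_measure \<Otimes>\<^sub>M arc_measure) (\<lambda>\<omega>. (ZU \<omega>, ZV \<omega>))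
           (\<lambda>z. ennreal (bc_density \<psi> z))"
  shows "prob_space.expectation M (\<lambda>\<omega>. ZU \<omega> powi j * ZV \<omega> powi k) =
           (if j = - k \<and> j \<ge> 0 then \<psi> powi j
            else if j = - k \<and> j < 0 then cnj \<psi> powi (- j)
            else 0)"
proof -
  let ?N = "arc_measure \<Otimes>\<^sub>M arc_measure"
  let ?X = "\<lambda>\<omega>. (ZU \<omega>, ZV \<omega>)"
  define g :: "complex \<times> complex \<Rightarrow> complex" where "g z = fst z powi j * snd z powi k" for z
  have Xm: "?X \<in> measurable M ?N" using assms(3) by (rule distributed_measurable)
  have sN: "sets ?N = sets (borel \<Otimes>\<^sub>M borel)"
    by (rule sets_pair_measure_cong) (simp_all add: sets_arc)
  have mN: "borel_measurable ?N = borel_measurable (borel \<Otimes>\<^sub>M borel)"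
    by (rule measurable_cong_sets[OF sN refl])
  have gm2: "g \<in> borel_measurable (borel \<Otimes>\<^sub>M borel)" unfolding g_def by measurable
  have gm: "g \<in> borel_measurable ?N" by (subst mN) (fact gm2)
  have bcN: "bc_density \<psi> \<in> borel_measurable ?N" by (subst mN) (fact bc_meas)
  have "prob_space.expectation M (\<lambda>\<omega>. ZU \<omega> powi j * ZV \<omega> powi k) = integral\<^sup>L M (\<lambda>\<omega>. g (?X \<omega>))"
    by (simp add: g_def)
  also have "\<dots> = integral\<^sup>L (distr M ?N ?X) g"
    by (rule integral_distr[symmetric, OF Xm gm])
  also have "\<dots> = integral\<^sup>L (density ?N (\<lambda>z. ennreal (bc_density \<psi> z))) g"
    using distributed_distr_eq_density[OF assms(3)] by simp
  also have "\<dots> = integral\<^sup>L ?N (\<lambda>z. bc_density \<psi> z *\<^sub>R g z)"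
    by (rule integral_density[OF gm bcN]) (simp add: bc_nonneg[OF assms(2)])
  also have "\<dots> = integral\<^sup>L (distr (RR \<Otimes>\<^sub>M RR) (borel \<Otimes>\<^sub>M borel) (\<lambda>(s, t). (cis s, cis t))) (\<lambda>z. bc_density \<psi> z *\<^sub>R g z)"
    by (simp add: arc_pair)
  also have "\<dots> = integral\<^sup>L (RR \<Otimes>\<^sub>M RR) (\<lambda>x. bc_density \<psi> ((\<lambda>(s, t). (cis s, cis t)) x) *\<^sub>R g ((\<lambda>(s, t). (cis s, cis t)) x))"
  proof (rule integral_distr)
    show "(\<lambda>(s, t). (cis s, cis t)) \<in> measurable (RR \<Otimes>\<^sub>M RR) (borel \<Otimes>\<^sub>M borel)"
      by measurable
    show "(\<lambda>z. bc_density \<psi> z *\<^sub>R g z) \<in> borel_measurable (borel \<Otimes>\<^sub>M borel)"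
      using bc_meas gm2 by (rule borel_measurable_scaleR)
  qed
  also have "\<dots> = integral\<^sup>L (RR \<Otimes>\<^sub>M RR) (\<lambda>(s,t). bc_density \<psi> (cis s, cis t) *\<^sub>R (cis s powi j * cis t powi k))"
    by (simp add: g_def split_beta')
  also have "\<dots> = (if j = - k \<and> j \<ge> 0 then \<psi> powi j
            else if j = - k \<and> j < 0 then cnj \<psi> powi (- j)
            else 0)"
    by (rule main_RR[OF assms(2)])
  finally show ?thesis .
qed


end
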